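(* Let $m<M$ be real numbers and let $X$ be a random variable taking values in $[m,M]$, either discrete (taking finitely many values $x_1,\dots,x_n\in[m,M]$ with probabilities $p_1,\dots,p_n$) or continuous (with probability density $f$ on $[m,M]$). Let $\mu_4$ denote the fourth central moment of $X$. Then $$\mu_4\le \frac{(M-m)^4}{12}.$$
   Context: The mean is $\mu_1'=\sum_{i=1}^n p_i x_i$ (discrete case) or $\mu_1'=\int_m^M x f(x)\,dx$ (continuous case), where $\sum p_i=1$, resp. $\int_m^M f(x)\,dx=1$. The $r$-th central moment is $\mu_r=\sum_{i=1}^n p_i (x_i-\mu_1')^r$, resp. $\mu_r=\int_m^M (x-\mu_1')^r f(x)\,dx$. *)

theory Defs
  imports "HOL-Analysis.Analysis"
begin

definition disc_mean :: "nat \<Rightarrow> (nat \<Rightarrow> real) \<Rightarrow> (nat \<Rightarrow> real) \<Rightarrow> real" where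
  "disc_mean n p x = (\<Sum>i<n. p i * x i)"

definition disc_central_moment :: "nat \<Rightarrow> nat \<Rightarrow> (nat \<Rightarrow> real) \<Rightarrow> (nat \<Rightarrow> real) \<Rightarrow> real" where
  "disc_central_moment r n p x = (\<Sum>i<n. p i * (x i - disc_mean n p x) ^ r)"

definition cont_mean :: "real \<Rightarrow> real \<Rightarrow> (real \<Rightarrow> real) \<Rightarrow> real" where
  "cont_mean m M f = integral {m..M} (\<lambda>t. t * f t)"

definition cont_central_moment :: "nat \<Rightarrow> real \<Rightarrow> real \<Rightarrow> (real \<Rightarrow> real) \<Rightarrow> real" where
  "cont_central_moment r m M f = integral {m..M} (\<lambda>t. (t - cont_mean m M f) ^ r * f t)"

end

theory Submission
  imports Defs
begin

lemma intg:
  fixes f g :: "real \<Rightarrow> real"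
  assumes g: "continuous_on {m..M} g" and f0: "\<forall>t\<in>{m..M}. f t \<ge> 0" and fi: "f integrable_on {m..M}"
  shows "(\<lambda>t. g t * f t) integrable_on {m..M}"
proof -
  have fa: "f absolutely_integrable_on {m..M}"
    using fi f0 by (intro nonnegative_absolutely_integrable_1) auto
  have meas: "g \<in> borel_measurable (lebesgue_on {m..M})"
    by (rule continuous_imp_measurable_on_sets_lebesgue[OF g]) simp
  have bd: "bounded (g ` {m..M})"
    by (rule compact_imp_bounded[OF compact_continuous_image[OF g compact_Icc]])
  have "(\<lambda>t. g t * f t) absolutely_integrable_on {m..M}"
    by (rule absolutely_integrable_bounded_measurable_product_real[OF meas _ bd fa]) simp
  then show ?thesis by (rule set_lebesgue_integral_eq_integral(1))
qed
lemma lin1: fixes Q P :: real shows "4*Q = P \<Longrightarrow> 0 \<le> P \<Longrightarrow> 0 \<le> Q" by linarith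
lemma lin2: fixes X Z :: real shows "X = Z \<Longrightarrow> Z \<le> 0 \<Longrightarrow> X \<le> 0" by linarith
lemma lin3: fixes X Y Z :: real shows "X - Y \<le> 0 \<Longrightarrow> X \<le> Y" by linarith
lemma lin4: fixes X Y Z :: real shows "X + Z = Y \<Longrightarrow> 0 \<le> Z \<Longrightarrow> X \<le> Y" by linarith

lemma e1: fixes a b y :: real shows "4 * (y^2 + (b - a) * y + (a^2 - a * b + b^2)) = (2 * y + (b - a))^2 + 2 * (a - b)^2 + (a + b)^2"
  by algebra
lemma e2: fixes a b y :: real shows "y^4 - ((b - a) * (a^2 + b^2) * y + a * b * (a^2 - a * b + b^2)) = (y + a) * (y - b) * (y^2 + (b - a) * y + (a^2 - a * b + b^2))"
  by algebra
lemma e3: fixes c m M u :: real shows "u = (c-m)*(M-c) \<Longrightarrow> (c-m)*(M-c)*((c-m)^2-(c-m)*(M-c)+(M-c)^2) = u*(M-m)^2 - 3*u^2"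
  by algebra
lemma e4: fixes u L :: real shows "12*(u*L - 3*u^2) + (6*u - L)^2 = L^2" by algebra

lemma key:
  fixes t c m M :: real
  assumes "m \<le> t" "t \<le> M"
  shows "(t-c)^4 \<le> (c-m)*(M-c)*((c-m)^2-(c-m)*(M-c)+(M-c)^2) + ((M-c)-(c-m))*((c-m)^2+(M-c)^2)*(t-c)"
proof -
  define a where "a = c - m"
  define b where "b = M - c"
  define y where "y = t - c"
  have "0 \<le> (2 * y + (b - a))^2 + 2 * (a - b)^2 + (a + b)^2" by simp
  hence q: "y^2 + (b - a) * y + (a^2 - a * b + b^2) \<ge> 0" by (rule lin1[OF e1[of y b a]])
  have r: "(y + a) * (y - b) \<le> 0" using assms unfolding a_def b_def y_def
    by (simp add: mult_nonneg_nonpos)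
  have "(y + a) * (y - b) * (y^2 + (b - a) * y + (a^2 - a * b + b^2)) \<le> 0"
    using q r by (simp add: mult_nonpos_nonneg)
  hence "y^4 - ((b - a) * (a^2 + b^2) * y + a * b * (a^2 - a * b + b^2)) \<le> 0" by (rule lin2[OF e2[of y b a]])
  hence "y^4 \<le> (b - a) * (a^2 + b^2) * y + a * b * (a^2 - a * b + b^2)" by (rule lin3)
  hence "y^4 \<le> a * b * (a^2 - a * b + b^2) + (b - a) * (a^2 + b^2) * y" by (simp only: add.commute)
  thus ?thesis by (simp only: a_def b_def y_def)
qed

lemma alpha:
  fixes m M c :: real
  shows "(c-m)*(M-c)*((c-m)^2-(c-m)*(M-c)+(M-c)^2) \<le> (M-m)^4/12"
proof -
  define u where "u = (c-m)*(M-c)"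
  define L where "L = (M-m)^2"
  have L4: "(M-m)^4 = L^2" unfolding L_def by (simp add: power_mult[symmetric])
  have "0 \<le> (6*u - L)^2" by simp
  hence "12*(u*L - 3*u^2) \<le> L^2" by (rule lin4[OF e4[of u L]])
  moreover have "(c-m)*(M-c)*((c-m)^2-(c-m)*(M-c)+(M-c)^2) = u*L - 3*u^2"
    using e3[OF u_def] unfolding L_def .
  ultimately show ?thesis unfolding L4 by simp
qed

theorem theorem2p1:
  fixes m M :: real
  assumes "m < M"
  shows "(\<forall>(n::nat) (p::nat \<Rightarrow> real) (x::nat \<Rightarrow> real).
            (\<forall>i<n. x i \<in> {m..M} \<and> p i \<ge> 0) \<and> (\<Sum>i<n. p i) = 1
            \<longrightarrow> disc_central_moment 4 n p x \<le> (M - m) ^ 4 / 12)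
       \<and> (\<forall>f::real \<Rightarrow> real.
            (\<forall>t\<in>{m..M}. f t \<ge> 0) \<and> f integrable_on {m..M} \<and> integral {m..M} f = 1
            \<longrightarrow> cont_central_moment 4 m M f \<le> (M - m) ^ 4 / 12)"
proof (intro conjI allI impI)
  fix n :: nat and p x :: "nat \<Rightarrow> real"
  assume h: "(\<forall>i<n. x i \<in> {m..M} \<and> p i \<ge> 0) \<and> (\<Sum>i<n. p i) = 1"
  define c where "c = disc_mean n p x"
  define A where "A = (c-m)*(M-c)*((c-m)^2-(c-m)*(M-c)+(M-c)^2)"
  define B where "B = ((M-c)-(c-m))*((c-m)^2+(M-c)^2)"
  have "disc_central_moment 4 n p x = (\<Sum>i<n. p i * (x i - c)^4)"
    unfolding disc_central_moment_def c_def ..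
  also have "\<dots> \<le> (\<Sum>i<n. p i * (A + B * (x i - c)))"
    apply (rule sum_mono) apply (rule mult_left_mono)
    using h key unfolding A_def B_def by auto
  also have "\<dots> = A * (\<Sum>i<n. p i) + B * ((\<Sum>i<n. p i * x i) - c * (\<Sum>i<n. p i))"
    by (simp add: algebra_simps sum.distrib sum_distrib_left sum_subtractf)
  also have "\<dots> = A" using h unfolding c_def disc_mean_def by simp
  also have "\<dots> \<le> (M-m)^4/12" unfolding A_def by (rule alpha)
  finally show "disc_central_moment 4 n p x \<le> (M - m) ^ 4 / 12" .
next
  fix f :: "real \<Rightarrow> real"
  assume h: "(\<forall>t\<in>{m..M}. f t \<ge> 0) \<and> f integrable_on {m..M} \<and> integral {m..M} f = 1"
  define c where "c = cont_mean m M f"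
  define A where "A = (c-m)*(M-c)*((c-m)^2-(c-m)*(M-c)+(M-c)^2)"
  define B where "B = ((M-c)-(c-m))*((c-m)^2+(M-c)^2)"
  have i1: "(\<lambda>t. (t-c)^4 * f t) integrable_on {m..M}"
    by (rule intg) (use h in \<open>auto intro!: continuous_intros\<close>)
  have i2: "(\<lambda>t. (A + B*(t-c)) * f t) integrable_on {m..M}"
    by (rule intg) (use h in \<open>auto intro!: continuous_intros\<close>)
  have i3: "(\<lambda>t. t * f t) integrable_on {m..M}"
    by (rule intg) (use h in \<open>auto intro!: continuous_intros\<close>)
  have "cont_central_moment 4 m M f = integral {m..M} (\<lambda>t. (t-c)^4 * f t)"
    unfolding cont_central_moment_def c_def ..
  also have "\<dots> \<le> integral {m..M} (\<lambda>t. (A + B*(t-c)) * f t)"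
    apply (rule integral_le[OF i1 i2])
    apply (rule mult_right_mono) using h key unfolding A_def B_def by auto
  also have "(\<lambda>t. (A + B*(t-c)) * f t) = (\<lambda>t. (A - B*c) * f t + B * (t * f t))"
    by (auto simp: algebra_simps)
  also have "integral {m..M} \<dots> = (A - B*c) * integral {m..M} f + B * integral {m..M} (\<lambda>t. t * f t)"
  proof -
    have "((\<lambda>t. (A - B*c) * f t) has_integral (A - B*c) * integral {m..M} f) {m..M}"
      using h by (intro has_integral_mult_right integrable_integral) auto
    moreover have "((\<lambda>t. B * (t * f t)) has_integral B * integral {m..M} (\<lambda>t. t * f t)) {m..M}"
      using i3 by (intro has_integral_mult_right integrable_integral)
    ultimately show ?thesis by (intro integral_unique has_integral_add)
  qed
  also have "\<dots> = A" using h unfolding c_def cont_mean_def by (simp add: algebra_simps)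
  also have "\<dots> \<le> (M-m)^4/12" unfolding A_def by (rule alpha)
  finally show "cont_central_moment 4 m M f \<le> (M - m) ^ 4 / 12" .
qed

end
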